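(* Let $X$ and $Y$ be Banach spaces and $u:X\to Y$ a continuous linear operator. If the adjoint $u^*:Y^*\to X^*$ is almost summing, then for every $q\geq 2$ and every $(x_i)_{i=1}^\infty\in Rad(X)$ we have $(u(x_i))_{i=1}^\infty\in\ell_q\langle Y\rangle$.
   Context: $r_i$ denote the Rademacher functions. $Rad(X)$ is the space of sequences $(x_i)\subset X$ with $\left(\int_0^1\left\|\sum_{i=1}^\infty r_i(t)x_i\right\|^2dt\right)^{1/2}<\infty$. For $1\le s\le\infty$, $\ell_s^w(X)$ is the space of sequences with $\|(x_i)\|_{w,s}:=\sup_{x^*\in B_{X^*}}\|(x^*(x_i))_i\|_s<\infty$. For $1\le q\le \infty$ with conjugate $q^*$, $\ell_q\langle Y\rangle$ is the space of sequences $(y_i)\subset Y$ such that $\sup\{\sum_i|y_i^*(y_i)|:(y_i^* )\in B_{\ell_{q^*}^w(Y^* )}\}<\infty$. An operator $v\in\mathcal L(E,F)$ is almost summing if there is $C\ge0$ with $\left(\int_0^1\left\|\sum_{i=1}^m r_i(t)v(x_i)\right\|^2dt\right)^{1/2}\le C\|(x_i)_{i=1}^m\|_{w,2}$ for all $m$ and $x_1,\dots,x_m\in E$. *)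

theory Defs
  imports "HOL-Analysis.Analysis"
begin

definition rademacher :: "nat \<Rightarrow> real \<Rightarrow> real" where
  "rademacher n t = sgn (sin (2 ^ n * pi * t))"

definition adjoint_op :: "('a::real_normed_vector \<Rightarrow>\<^sub>L 'b::real_normed_vector)
    \<Rightarrow> (('b \<Rightarrow>\<^sub>L real) \<Rightarrow>\<^sub>L ('a \<Rightarrow>\<^sub>L real))" where
  "adjoint_op u = Blinfun (\<lambda>f. f o\<^sub>L u)"

definition weak2_norm_fin :: "nat \<Rightarrow> (nat \<Rightarrow> 'a::real_normed_vector) \<Rightarrow> real" where
  "weak2_norm_fin m x =
     (SUP f \<in> {f :: 'a \<Rightarrow>\<^sub>L real. norm f \<le> 1}. sqrt (\<Sum>i<m. (blinfun_apply f (x i))\<^sup>2))"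

definition almost_summing :: "('a::real_normed_vector \<Rightarrow>\<^sub>L 'b::real_normed_vector) \<Rightarrow> bool" where
  "almost_summing v \<longleftrightarrow> (\<exists>C\<ge>0. \<forall>m (x :: nat \<Rightarrow> 'a).
     sqrt (integral {0..1} (\<lambda>t. (norm (\<Sum>i<m. rademacher (Suc i) t *\<^sub>R blinfun_apply v (x i)))\<^sup>2))
       \<le> C * weak2_norm_fin m x)"

text \<open>Rad(X): the sequence x_0, x_1, ... (standing for x_1, x_2, ... of the paper) such that
  the Rademacher series sum r_i(t) x_i converges for a.e. t in [0,1] and
  the integral of the squared norm of its sum over [0,1] is finite.\<close>
definition Rad :: "(nat \<Rightarrow> 'a::banach) set" where
  "Rad = {x. (AE t in lborel. t \<in> {0..1} \<longrightarrow> summable (\<lambda>i. rademacher (Suc i) t *\<^sub>R x i)) \<and>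
             (\<lambda>t. (norm (\<Sum>i. rademacher (Suc i) t *\<^sub>R x i))\<^sup>2) integrable_on {0..1}}"

definition weak_lp_ball :: "real \<Rightarrow> (nat \<Rightarrow> 'a::real_normed_vector) set" where
  "weak_lp_ball s = {y. \<forall>f :: 'a \<Rightarrow>\<^sub>L real. norm f \<le> 1 \<longrightarrow>
       summable (\<lambda>i. \<bar>blinfun_apply f (y i)\<bar> powr s) \<and> (\<Sum>i. \<bar>blinfun_apply f (y i)\<bar> powr s) \<le> 1}"

text \<open>The Cohen space l_q<Y> for 1 < q < infinity, conjugate exponent q/(q-1).\<close>
definition cohen_lq :: "real \<Rightarrow> (nat \<Rightarrow> 'b::real_normed_vector) set" where
  "cohen_lq q = {y. \<exists>C. \<forall>ys \<in> weak_lp_ball (q / (q - 1)) :: (nat \<Rightarrow> ('b \<Rightarrow>\<^sub>L real)) set.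
       summable (\<lambda>i. \<bar>blinfun_apply (ys i) (y i)\<bar>) \<and> (\<Sum>i. \<bar>blinfun_apply (ys i) (y i)\<bar>) \<le> C}"

end

theory Submission
  imports Defs
begin


lemma sin_add_nat_pi: "sin (x + real k * pi) = (-1) ^ k * sin x"
proof (induction k)
  case 0 then show ?case by simp
next
  case (Suc k)
  have "sin (x + real (Suc k) * pi) = sin ((x + real k * pi) + pi)" by (simp add: algebra_simps)
  also have "\<dots> = - sin (x + real k * pi)" by simp
  finally show ?case using Suc by simp
qed

lemma sgn_sin_floor:
  assumes "0 \<le> y" "y \<notin> \<int>"
  shows "sgn (sin (pi * y)) = (-1) ^ nat \<lfloor>y\<rfloor>"
proof -
  define k where "k = nat \<lfloor>y\<rfloor>"
  have yk: "real k = of_int \<lfloor>y\<rfloor>" using assms(1) by (simp add: k_def)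
  define f where "f = y - real k"
  have f0: "0 < f" using assms yk unfolding f_def
    by (metis Ints_of_int diff_gt_0_iff_gt floor_le_iff le_less of_int_floor_le)
  have f1: "f < 1" using yk unfolding f_def by linarith
  have "sin (pi * y) = sin (pi * f + real k * pi)" by (simp add: f_def algebra_simps)
  also have "\<dots> = (-1) ^ k * sin (pi * f)" by (rule sin_add_nat_pi)
  finally have e: "sin (pi * y) = (-1) ^ k * sin (pi * f)" .
  have "0 < sin (pi * f)" using f0 f1 by (intro sin_gt_zero) auto
  then show ?thesis using e k_def by (cases "even k") (auto simp: sgn_mult)
qed

lemma rad_piece:
  assumes "j \<le> m" "real k < 2^m * t" "2^m * t < real k + 1"
  shows "rademacher j t = (-1) ^ (k div 2^(m-j))"
proof -
  define y where "y = 2^j * t"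
  have "0 < 2^m * t" using assms(2) by (smt (verit) of_nat_0_le_iff)
  then have t0: "0 \<le> t" by (simp add: zero_less_mult_iff)
  have y0: "0 \<le> y" using t0 by (simp add: y_def)
  have mj: "(2::real)^m = 2^j * 2^(m-j)" using assms(1) by (simp add: power_add[symmetric])
  have ym: "2^m * t = y * 2^(m-j)" using mj by (simp add: y_def algebra_simps)
  have fk: "\<lfloor>2^m * t\<rfloor> = int k" using assms(2,3) by (simp add: floor_eq_iff)
  have "\<lfloor>y\<rfloor> = \<lfloor>(2^m * t) / real_of_int (2^(m-j))\<rfloor>" using ym by simp
  also have "\<dots> = \<lfloor>2^m * t\<rfloor> div 2^(m-j)" by (rule floor_divide_real_eq_div) simp
  also have "\<dots> = int (k div 2^(m-j))" using fk by (simp add: zdiv_int)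
  finally have fy: "nat \<lfloor>y\<rfloor> = k div 2^(m-j)" by simp
  have yZ: "y \<notin> \<int>"
  proof
    assume "y \<in> \<int>"
    then obtain z where z: "y = of_int z" by (auto elim: Ints_cases)
    then have "2^m * t = of_int (z * 2^(m-j))" using ym by simp
    then have "real k < real_of_int (z * 2^(m-j))" "real_of_int (z * 2^(m-j)) < real k + 1"
      using assms(2,3) by auto
    then have "int k < z * 2^(m-j)" "z * 2^(m-j) < int k + 1" by linarith+
    then show False by linarith
  qed
  have "rademacher j t = sgn (sin (pi * y))" by (simp add: rademacher_def y_def algebra_simps)
  also have "\<dots> = (-1) ^ nat \<lfloor>y\<rfloor>" by (rule sgn_sin_floor[OF y0 yZ])
  finally show ?thesis using fy by simp
qed

lemma pc_integrable:
  fixes f h :: "real \<Rightarrow> real"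
  assumes h: "h integrable_on {0..1}"
    and pc: "\<And>k. k < 2^m \<Longrightarrow> \<exists>c. \<forall>t. real k < 2^m * t \<and> 2^m * t < real k + 1 \<longrightarrow> f t = c * h t"
  shows "f integrable_on {0..1}"
proof -
  have "n \<le> 2^m \<Longrightarrow> f integrable_on {0..real n / 2^m}" for n
  proof (induction n)
    case 0
    then show ?case using integrable_on_refl[of f 0] by simp
  next
    case (Suc n)
    then have n: "n < 2^m" by simp
    obtain c where c: "\<And>t. real n < 2^m * t \<Longrightarrow> 2^m * t < real n + 1 \<Longrightarrow> f t = c * h t"
      using pc[OF n] by blast
    have sub: "{real n / 2^m .. real (Suc n) / 2^m} \<subseteq> {0..1}"
    proof -
      have "real (Suc n) \<le> 2^m" using Suc.prems
        by (metis of_nat_le_iff of_nat_numeral of_nat_power)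
      then show ?thesis by (auto simp: field_simps)
    qed
    have "h integrable_on {real n / 2^m .. real (Suc n) / 2^m}"
      by (rule integrable_on_subinterval[OF h sub])
    then have "(\<lambda>t. c * h t) integrable_on {real n / 2^m .. real (Suc n) / 2^m}" by (rule integrable_on_mult_right)
    then have I2: "f integrable_on {real n / 2^m .. real (Suc n) / 2^m}"
    proof (rule integrable_spike[where S="{real n / 2^m, real (Suc n) / 2^m}"])
      show "negligible {real n / 2 ^ m, real (Suc n) / 2 ^ m}" by auto
      fix t assume "t \<in> {real n / 2 ^ m..real (Suc n) / 2 ^ m} - {real n / 2 ^ m, real (Suc n) / 2 ^ m}"
      then have "real n / 2^m < t" "t < real (Suc n) / 2^m" by auto
      then have "real n < 2^m * t" "2^m * t < real n + 1" by (auto simp: field_simps)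
      then show "f t = c * h t" by (rule c)
    qed
    have I1: "f integrable_on {0..real n / 2^m}" using Suc n by simp
    show ?case by (rule Henstock_Kurzweil_Integration.integrable_combine[OF _ _ I1 I2]) (auto simp: field_simps)
  qed
  from this[of "2^m"] show ?thesis by simp
qed

lemma rad_determined_integrable:
  fixes F h :: "real \<Rightarrow> real"
  assumes h: "h integrable_on {0..1}"
    and det: "\<And>t s. (\<forall>j\<le>m. rademacher j t = rademacher j s) \<Longrightarrow> F t = F s"
  shows "(\<lambda>t. F t * h t) integrable_on {0..1}"
proof (rule pc_integrable[OF h, where m=m])
  fix k :: nat assume "k < 2^m"
  define mid where "mid = (real k + 1/2) / 2^m"
  have mid: "real k < 2^m * mid" "2^m * mid < real k + 1" by (auto simp: mid_def)
  show "\<exists>c. \<forall>t. real k < 2 ^ m * t \<and> 2 ^ m * t < real k + 1 \<longrightarrow> F t * h t = c * h t"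
  proof (intro exI allI impI)
    fix t assume t: "real k < 2 ^ m * t \<and> 2 ^ m * t < real k + 1"
    have "\<forall>j\<le>m. rademacher j t = rademacher j mid"
      using t mid rad_piece by metis
    then show "F t * h t = F mid * h t" using det by metis
  qed
qed

lemma rad_determined_integrable1:
  fixes F :: "real \<Rightarrow> real"
  assumes det: "\<And>t s. (\<forall>j\<le>m. rademacher j t = rademacher j s) \<Longrightarrow> F t = F s"
  shows "F integrable_on {0..1}"
  using rad_determined_integrable[where h="\<lambda>_. 1" and m=m and F=F] det by auto

lemma periodic_shift:
  fixes F :: "real \<Rightarrow> real"
  assumes F: "F integrable_on {0..1}" and per: "\<And>t. F (t + 1) = F t" and c: "0 \<le> c" "c \<le> 1"
  shows "integral {0..1} (\<lambda>t. F (t + c)) = integral {0..1} F"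
proof -
  have Fc: "F integrable_on {0..c}" "F integrable_on {c..1}"
    using F c by (auto intro: integrable_on_subinterval)
  have F1: "(\<lambda>x. F (x + 1)) integrable_on {0..c}" using Fc(1) per by simp
  then have F1': "F integrable_on {1..1+c}"
    using integrable_shift_real_ivl_iff[of F 1 "1" "1+c"] by simp
  have e1: "integral {1..1+c} F = integral {0..c} F"
    using integral_shift_real_ivl[of "1" 1 "1+c" F] per by simp
  have Fall: "F integrable_on {c..1+c}"
    by (rule Henstock_Kurzweil_Integration.integrable_combine[OF _ _ Fc(2) F1']) (use c in auto)
  have "integral {0..1} (\<lambda>t. F (t + c)) = integral {c..1+c} F"
    using integral_shift_real_ivl[of c c "1+c" F] by simp
  also have "\<dots> = integral {c..1} F + integral {1..1+c} F"
    using Henstock_Kurzweil_Integration.integral_combine[OF _ _ Fall, of 1] c by simp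
  also have "\<dots> = integral {0..1} F"
    using Henstock_Kurzweil_Integration.integral_combine[OF _ _ F, of c] c e1 by simp
  finally show ?thesis .
qed

lemma periodic_antishift_zero:
  fixes F :: "real \<Rightarrow> real"
  assumes F: "F integrable_on {0..1}" and per: "\<And>t. F (t + 1) = F t" and c: "0 \<le> c" "c \<le> 1"
    and anti: "\<And>t. F (t + c) = - F t"
  shows "integral {0..1} F = 0"
proof -
  have "integral {0..1} F = integral {0..1} (\<lambda>t. - F t)"
    using periodic_shift[OF F per c] anti by simp
  also have "\<dots> = - integral {0..1} F" by (simp add: integral_neg)
  finally show ?thesis by simp
qed

lemma negligible_countable_set:
  fixes S :: "'a::euclidean_space set"
  assumes "countable S" shows "negligible S"
proof -
  have "S = \<Union> ((\<lambda>x. {x}) ` S)" by auto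
  moreover have "negligible (\<Union> ((\<lambda>x. {x}) ` S))"
    by (rule negligible_countable_Union) (use assms in auto)
  ultimately show ?thesis by simp
qed

lemma rad_shift:
  assumes "m \<le> n"
  shows "rademacher n (t + 1/2^m) = (-1) ^ (2^(n-m)) * rademacher n t"
proof -
  have e: "2^n * pi * (t + 1/2^m) = 2^n * pi * t + real (2^(n-m)) * pi"
  proof -
    have "(2::real)^n / 2^m = 2^(n-m)" using assms by (simp add: power_diff)
    then have "pi * 2^n / 2^m = pi * 2^(n-m)" by (metis times_divide_eq_right)
    then show ?thesis by (simp add: algebra_simps)
  qed
  show ?thesis unfolding rademacher_def e sin_add_nat_pi
    by (cases "even (2^(n-m)::nat)") (auto simp: sgn_mult)
qed

lemma rad_per1: "1 \<le> n \<Longrightarrow> rademacher n (t + 1) = rademacher n t"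
  using rad_shift[of 0 n t] by simp

lemma rad_shift_hi: "m < n \<Longrightarrow> rademacher n (t + 1/2^m) = rademacher n t"
  using rad_shift[of m n t] by simp

lemma rad_shift_eq: "rademacher n (t + 1/2^n) = - rademacher n t"
  using rad_shift[of n n t] by simp

lemma rad_sq_ae: "negligible {t. (rademacher n t)^2 \<noteq> 1}"
proof -
  have "{t. (rademacher n t)^2 \<noteq> 1} \<subseteq> range (\<lambda>i::int. of_int i / 2^n)"
  proof
    fix t assume "t \<in> {t. (rademacher n t)^2 \<noteq> 1}"
    then have "sin (2^n * pi * t) = 0" by (auto simp: rademacher_def sgn_if split: if_splits)
    then obtain i :: int where "2^n * pi * t = of_int i * pi" by (auto simp: sin_zero_iff_int2)
    then have "t = of_int i / 2^n" by (simp add: field_simps)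
    then show "t \<in> range (\<lambda>i::int. of_int i / 2^n)" by auto
  qed
  then show ?thesis by (rule negligible_subset[OF negligible_countable_set, rotated]) auto
qed

lemma rad_abs_le: "\<bar>rademacher n t\<bar> \<le> 1"
  by (simp add: rademacher_def sgn_if)

lemma rad_prod_integrable: "(\<lambda>t. rademacher n t * rademacher j t) integrable_on {0..1}"
  by (rule rad_determined_integrable1[where m="max n j"]) auto

lemma rad_integrable: "rademacher n integrable_on {0..1}"
  by (rule rad_determined_integrable1[where m=n]) auto

lemma rad_orth:
  assumes "1 \<le> j" "j < n"
  shows "integral {0..1} (\<lambda>t. rademacher n t * rademacher j t) = 0"
proof (rule periodic_antishift_zero[OF rad_prod_integrable, where c="1/2^j"])
  show "rademacher n (t + 1) * rademacher j (t + 1) = rademacher n t * rademacher j t" for t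
    using assms rad_per1[of n t] rad_per1[of j t] by simp
  show "rademacher n (t + 1/2^j) * rademacher j (t + 1/2^j) = - (rademacher n t * rademacher j t)" for t
    using assms rad_shift_hi[of j n t] rad_shift_eq[of j t] by simp
  show "0 \<le> 1 / (2::real) ^ j" by simp
  show "1 / (2::real) ^ j \<le> 1" by simp
qed

lemma rad_sq_int: "integral {0..1} (\<lambda>t. rademacher n t * rademacher n t) = 1"
proof -
  have "integral {0..1} (\<lambda>t. rademacher n t * rademacher n t) = integral {0..1::real} (\<lambda>t. 1::real)"
  proof (rule integral_spike[OF rad_sq_ae[of n]])
    fix x assume "x \<in> {0..1::real} - {t. (rademacher n t)\<^sup>2 \<noteq> 1}"
    then show "1 = rademacher n x * rademacher n x" by (simp add: power2_eq_square)
  qed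
  then show ?thesis by (simp add: integral_const_real)
qed

definition radsum :: "(nat \<Rightarrow> 'a::banach) \<Rightarrow> real \<Rightarrow> 'a" where
  "radsum x t = (\<Sum>i. rademacher (Suc i) t *\<^sub>R x i)"

lemma partial_integrable:
  "(\<lambda>t. \<Sum>i<k. rademacher (Suc i) t * c i) integrable_on {0..1}"
  by (rule rad_determined_integrable1[where m=k]) (auto intro!: sum.cong)

lemma half_sq: "(a::real) \<le> (1 + a^2) / 2"
proof -
  have "0 \<le> (a - 1)^2" by simp
  then show ?thesis by (simp add: power2_eq_square algebra_simps)
qed
lemma half_sq_mult: "0 \<le> (c::real) \<Longrightarrow> c * a \<le> c / 2 * (1 + a^2)"
proof -
  assume c: "0 \<le> c"
  have "c * a \<le> c * ((1 + a^2) / 2)" by (rule mult_left_mono[OF half_sq c])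
  also have "\<dots> = c / 2 * (1 + a^2)" by simp
  finally show ?thesis .
qed
lemma G_integrable:
  fixes x :: "nat \<Rightarrow> 'a::banach" and g :: "'a \<Rightarrow>\<^sub>L real"
  assumes N: "negligible N"
    and summ: "\<And>t. t \<in> {0..1} - N \<Longrightarrow> summable (\<lambda>i. rademacher (Suc i) t *\<^sub>R x i)"
    and sq: "(\<lambda>t. (norm (radsum x t))\<^sup>2) integrable_on {0..1}"
  shows "(\<lambda>t. g (radsum x t)) integrable_on {0..1}"
proof -
  have meas: "(\<lambda>t. g (radsum x t)) measurable_on {0..1}"
  proof (rule measurable_on_limit[OF _ N])
    show "(\<lambda>t. \<Sum>i<k. rademacher (Suc i) t * g (x i)) measurable_on {0..1}" for k
      using integrable_imp_measurable[OF partial_integrable[where k=k and c="\<lambda>i. g (x i)"]]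
      by (simp add: measurable_on_iff_borel_measurable)
    fix t assume t: "t \<in> {0..1} - N"
    have "(\<lambda>k. \<Sum>i<k. rademacher (Suc i) t *\<^sub>R x i) \<longlonglongrightarrow> radsum x t"
      unfolding radsum_def by (rule summable_LIMSEQ[OF summ[OF t]])
    then have "(\<lambda>k. g (\<Sum>i<k. rademacher (Suc i) t *\<^sub>R x i)) \<longlonglongrightarrow> g (radsum x t)"
      by (rule blinfun.tendsto[OF tendsto_const])
    then show "(\<lambda>k. \<Sum>i<k. rademacher (Suc i) t * g (x i)) \<longlonglongrightarrow> g (radsum x t)"
      by (simp add: blinfun.sum_right blinfun.scaleR_right)
  qed
  show ?thesis
  proof (rule measurable_bounded_by_integrable_imp_integrable_real)
    show "(\<lambda>t. g (radsum x t)) \<in> borel_measurable (lebesgue_on {0..1})"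
      using meas by (simp add: measurable_on_iff_borel_measurable)
    show "(\<lambda>t. norm g / 2 * (1 + (norm (radsum x t))\<^sup>2)) integrable_on {0..1}"
      by (rule integrable_on_mult_right[OF integrable_add[OF integrable_const_ivl sq]])
    show "{0..1::real} \<in> sets lebesgue" by simp
    fix t :: real
    have "\<bar>g (radsum x t)\<bar> \<le> norm g * norm (radsum x t)"
      using norm_blinfun[of g "radsum x t"] by simp
    also have "\<dots> \<le> norm g / 2 * (1 + (norm (radsum x t))\<^sup>2)"
      by (rule half_sq_mult) simp
    finally show "\<bar>g (radsum x t)\<bar> \<le> norm g / 2 * (1 + (norm (radsum x t))\<^sup>2)" .
  qed
qed

lemma core:
  fixes x :: "nat \<Rightarrow> 'a::banach" and g :: "'a \<Rightarrow>\<^sub>L real"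
  assumes N: "negligible N"
    and summ: "\<And>t. t \<in> {0..1} - N \<Longrightarrow> summable (\<lambda>i. rademacher (Suc i) t *\<^sub>R x i)"
    and sq: "(\<lambda>t. (norm (radsum x t))\<^sup>2) integrable_on {0..1}"
  shows "(\<lambda>t. rademacher (Suc j) t * g (radsum x t)) integrable_on {0..1}"
    and "integral {0..1} (\<lambda>t. rademacher (Suc j) t * g (radsum x t)) = g (x j)"
proof -
  define n where "n = Suc j"
  define T where "T t = (\<Sum>k. rademacher (Suc (k + n)) t *\<^sub>R x (k + n))" for t
  define P where "P t = (\<Sum>i<n. rademacher (Suc i) t * g (x i))" for t
  have decomp: "g (radsum x t) = g (T t) + P t" if t: "t \<in> {0..1} - N" for t
  proof -
    have "radsum x t = T t + (\<Sum>i<n. rademacher (Suc i) t *\<^sub>R x i)"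
      unfolding radsum_def T_def using suminf_split_initial_segment[OF summ[OF t], of n] by simp
    then show ?thesis unfolding P_def
      by (simp add: blinfun.add_right blinfun.sum_right blinfun.scaleR_right)
  qed
  have Gi: "(\<lambda>t. g (radsum x t)) integrable_on {0..1}" by (rule G_integrable[OF N summ sq])
  have Pi: "P integrable_on {0..1}" unfolding P_def by (rule partial_integrable)
  have GTi: "(\<lambda>t. g (T t)) integrable_on {0..1}"
    by (rule integrable_spike[OF Henstock_Kurzweil_Integration.integrable_diff[OF Gi Pi] N])
       (use decomp in auto)
  define F where "F t = rademacher n t * g (T t)" for t
  have Fi: "F integrable_on {0..1}" unfolding F_def
    by (rule rad_determined_integrable[OF GTi, where m=n]) auto
  have Tper: "T (t + 1) = T t" for t
    unfolding T_def by (simp add: rad_per1)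
  have Tsh: "T (t + 1/2^n) = T t" for t
    unfolding T_def by (simp add: rad_shift_hi)
  have F0: "integral {0..1} F = 0"
  proof (rule periodic_antishift_zero[OF Fi, where c="1/2^n"])
    show "F (t + 1) = F t" for t unfolding F_def using Tper rad_per1[of n t] by (simp add: n_def)
    show "F (t + 1/2^n) = - F t" for t unfolding F_def using Tsh rad_shift_eq[of n t] by simp
  qed auto
  define Q where "Q t = (\<Sum>i<n. g (x i) * (rademacher n t * rademacher (Suc i) t))" for t
  have Qi: "Q integrable_on {0..1}" unfolding Q_def
    by (intro integrable_sum integrable_on_mult_right rad_prod_integrable) simp
  have "integral {0..1} Q = (\<Sum>i<n. g (x i) * integral {0..1} (\<lambda>t. rademacher n t * rademacher (Suc i) t))"
    unfolding Q_def by (subst integral_sum) (auto intro!: integrable_on_mult_right rad_prod_integrable)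
  also have "\<dots> = (\<Sum>i<j. g (x i) * integral {0..1} (\<lambda>t. rademacher n t * rademacher (Suc i) t)) + g (x j)"
    unfolding n_def by (simp add: rad_sq_int)
  also have "(\<Sum>i<j. g (x i) * integral {0..1} (\<lambda>t. rademacher n t * rademacher (Suc i) t)) = 0"
    by (intro sum.neutral ballI) (simp add: n_def rad_orth)
  finally have Q1: "integral {0..1} Q = g (x j)" by simp
  have eq: "rademacher (Suc j) t * g (radsum x t) = F t + Q t" if t: "t \<in> {0..1} - N" for t
    unfolding decomp[OF t] F_def Q_def P_def n_def
    by (simp add: distrib_left sum_distrib_left algebra_simps)
  show "(\<lambda>t. rademacher (Suc j) t * g (radsum x t)) integrable_on {0..1}"
    by (rule integrable_spike[OF Henstock_Kurzweil_Integration.integrable_add[OF Fi Qi] N]) (use eq in auto)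
  have "integral {0..1} (\<lambda>t. rademacher (Suc j) t * g (radsum x t)) = integral {0..1} (\<lambda>t. F t + Q t)"
    by (rule integral_spike[OF N]) (use eq in auto)
  also have "\<dots> = g (x j)" using Henstock_Kurzweil_Integration.integral_add[OF Fi Qi] F0 Q1 by simp
  finally show "integral {0..1} (\<lambda>t. rademacher (Suc j) t * g (radsum x t)) = g (x j)" .
qed

lemma am_gm_opt:
  fixes X A B :: real
  assumes A: "0 \<le> A" and B: "0 \<le> B" and H: "\<And>l. 0 < l \<Longrightarrow> X \<le> l / 2 * A + B / (2 * l)"
  shows "X \<le> sqrt A * sqrt B"
proof (rule field_le_epsilon)
  fix e :: real assume e: "0 < e"
  define a where "a = sqrt A"
  define b where "b = sqrt B"
  have a0: "0 \<le> a" and b0: "0 \<le> b" by (auto simp: a_def b_def A B)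
  have Aa: "A = a * a" and Bb: "B = b * b" by (simp_all add: a_def b_def A B flip: power2_eq_square)
  define d where "d = e / (a + b + 1)"
  have d0: "0 < d" using a0 b0 e by (simp add: d_def)
  have dab: "d * (a + b) \<le> e"
  proof -
    have "d * (a + b) \<le> d * (a + b + 1)" using d0 by simp
    also have "\<dots> = e" using a0 b0 by (simp add: d_def)
    finally show ?thesis .
  qed
  define l where "l = (b + d) / (a + d)"
  have l0: "0 < l" using a0 b0 d0 by (simp add: l_def)
  have t1: "l / 2 * A \<le> (b + d) * a / 2"
  proof -
    have "l / 2 * A = (b + d) / 2 * (a * a / (a + d))" by (simp add: l_def Aa field_simps)
    also have "\<dots> \<le> (b + d) / 2 * a"
    proof (rule mult_left_mono)
      show "a * a / (a + d) \<le> a" using a0 d0 by (simp add: divide_le_eq mult_left_mono)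
    qed (use b0 d0 in simp)
    finally show ?thesis by simp
  qed
  have t2: "B / (2 * l) \<le> b * (a + d) / 2"
  proof -
    have "B / (2 * l) = (a + d) / 2 * (b * b / (b + d))" using a0 b0 d0 by (simp add: l_def Bb field_simps)
    also have "\<dots> \<le> (a + d) / 2 * b"
    proof (rule mult_left_mono)
      show "b * b / (b + d) \<le> b" using b0 d0 by (simp add: divide_le_eq mult_left_mono)
    qed (use a0 d0 in simp)
    finally show ?thesis by (simp add: algebra_simps)
  qed
  have "X \<le> l / 2 * A + B / (2 * l)" by (rule H[OF l0])
  also have "\<dots> \<le> (b + d) * a / 2 + b * (a + d) / 2" using t1 t2 by simp
  also have "\<dots> = a * b + d * (a + b) / 2" by (simp add: field_simps)
  also have "\<dots> \<le> a * b + e" using dab d0 a0 b0 e by simp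
  finally show "X \<le> sqrt A * sqrt B + e" by (simp add: a_def b_def)
qed

lemma adjoint_apply: "blinfun_apply (adjoint_op u) f = f o\<^sub>L u"
  unfolding adjoint_op_def
  by (subst bounded_linear_Blinfun_apply)
     (auto intro: bounded_bilinear.bounded_linear_left[OF bounded_bilinear_blinfun_compose])


lemma weak2_le1:
  fixes ys :: "nat \<Rightarrow> 'c::real_normed_vector"
  assumes ys: "ys \<in> weak_lp_ball s" and s: "0 < s" "s \<le> 2" and sg: "\<And>i. \<bar>\<sigma> i\<bar> \<le> 1"
  shows "weak2_norm_fin m (\<lambda>i. \<sigma> i *\<^sub>R ys i) \<le> 1"
  unfolding weak2_norm_fin_def
proof (rule cSUP_least)
  show "{f :: 'c \<Rightarrow>\<^sub>L real. norm f \<le> 1} \<noteq> {}" by (auto intro: exI[of _ 0])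
  fix f :: "'c \<Rightarrow>\<^sub>L real" assume "f \<in> {f. norm f \<le> 1}"
  then have f: "norm f \<le> 1" by simp
  have summ: "summable (\<lambda>i. \<bar>f (ys i)\<bar> powr s)" and sle: "(\<Sum>i. \<bar>f (ys i)\<bar> powr s) \<le> 1"
    using ys f unfolding weak_lp_ball_def by auto
  have tm: "(f (\<sigma> i *\<^sub>R ys i))\<^sup>2 \<le> \<bar>f (ys i)\<bar> powr s" for i
  proof -
    have "\<bar>f (ys i)\<bar> powr s \<le> (\<Sum>i. \<bar>f (ys i)\<bar> powr s)"
      using sum_le_suminf[OF summ, of "{i}"] by simp
    then have p1: "\<bar>f (ys i)\<bar> powr s \<le> 1" using sle by simp
    have y1: "\<bar>f (ys i)\<bar> \<le> 1"
    proof (rule ccontr)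
      assume "\<not> \<bar>f (ys i)\<bar> \<le> 1"
      then have "1 < \<bar>f (ys i)\<bar> powr s" using s by (intro gr_one_powr) auto
      then show False using p1 by simp
    qed
    have "(f (\<sigma> i *\<^sub>R ys i))\<^sup>2 = (\<sigma> i)\<^sup>2 * (f (ys i))\<^sup>2"
      by (simp add: blinfun.scaleR_right power_mult_distrib)
    also have "\<dots> \<le> 1 * (f (ys i))\<^sup>2"
    proof (rule mult_right_mono)
      show "(\<sigma> i)\<^sup>2 \<le> 1" using sg[of i] by (simp add: abs_square_le_1)
    qed simp
    also have "\<dots> = \<bar>f (ys i)\<bar> powr 2" by simp
    also have "\<dots> \<le> \<bar>f (ys i)\<bar> powr s" by (rule powr_mono'[OF s(2)]) (use y1 in auto)
    finally show ?thesis .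
  qed
  have "(\<Sum>i<m. (f (\<sigma> i *\<^sub>R ys i))\<^sup>2) \<le> (\<Sum>i<m. \<bar>f (ys i)\<bar> powr s)"
    by (rule sum_mono[OF tm])
  also have "\<dots> \<le> (\<Sum>i. \<bar>f (ys i)\<bar> powr s)"
    by (rule sum_le_suminf[OF summ]) auto
  also have "\<dots> \<le> 1" by (rule sle)
  finally show "sqrt (\<Sum>i<m. (f (\<sigma> i *\<^sub>R ys i))\<^sup>2) \<le> 1" by simp
qed



theorem corollary2p2:
  fixes u :: "'a::banach \<Rightarrow>\<^sub>L 'b::banach"
  assumes "almost_summing (adjoint_op u)"
    and "q \<ge> (2::real)"
    and "x \<in> Rad"
  shows "(\<lambda>i. blinfun_apply u (x i)) \<in> cohen_lq q"
proof -
  obtain C0 where C0: "C0 \<ge> 0" and AS: "\<And>m (w :: nat \<Rightarrow> ('b \<Rightarrow>\<^sub>L real)).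
     sqrt (integral {0..1} (\<lambda>t. (norm (\<Sum>i<m. rademacher (Suc i) t *\<^sub>R blinfun_apply (adjoint_op u) (w i)))\<^sup>2))
       \<le> C0 * weak2_norm_fin m w"
    using assms(1) unfolding almost_summing_def by blast
  have AE: "AE t in lborel. t \<in> {0..1} \<longrightarrow> summable (\<lambda>i. rademacher (Suc i) t *\<^sub>R x i)"
    and sq: "(\<lambda>t. (norm (radsum x t))\<^sup>2) integrable_on {0..1}"
    using assms(3) unfolding Rad_def radsum_def by auto
  obtain N where N0: "\<And>t. t \<in> space lborel - N \<Longrightarrow> (t \<in> {0..1} \<longrightarrow> summable (\<lambda>i. rademacher (Suc i) t *\<^sub>R x i))"
    and Nnull: "N \<in> null_sets lborel"
    using AE by (rule AE_E3) blast
  have N: "negligible N" using null_sets_completionI[OF Nnull] by (simp add: negligible_iff_null_sets)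
  have summ: "\<And>t. t \<in> {0..1} - N \<Longrightarrow> summable (\<lambda>i. rademacher (Suc i) t *\<^sub>R x i)"
    using N0 by simp
  define B where "B = integral {0..1} (\<lambda>t. (norm (radsum x t))\<^sup>2)"
  have B0: "0 \<le> B" unfolding B_def by (rule integral_nonneg[OF sq]) simp
  define s where "s = q / (q - 1)"
  have s: "0 < s" "s \<le> 2" using assms(2) by (auto simp: s_def field_simps)
  show ?thesis
    unfolding cohen_lq_def
  proof (intro CollectI exI ballI)
    fix ys :: "nat \<Rightarrow> ('b \<Rightarrow>\<^sub>L real)"
    assume ys: "ys \<in> weak_lp_ball (q / (q - 1))"
    have bound: "(\<Sum>i<m. \<bar>ys i (u (x i))\<bar>) \<le> C0 * sqrt B" for m
    proof -
      define \<sigma> where "\<sigma> i = sgn (ys i (u (x i)))" for i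
      define w where "w i = \<sigma> i *\<^sub>R ys i" for i
      define g where "g i = blinfun_apply (adjoint_op u) (w i)" for i
      define H where "H t = (\<Sum>i<m. rademacher (Suc i) t *\<^sub>R g i)" for t
      define A where "A = integral {0..1} (\<lambda>t. (norm (H t))\<^sup>2)"
      have gx: "g i (x i) = \<bar>ys i (u (x i))\<bar>" for i
        by (simp add: g_def w_def \<sigma>_def adjoint_apply blinfun.scaleR_left sgn_if)
      have Hi: "(\<lambda>t. (norm (H t))\<^sup>2) integrable_on {0..1}"
      proof (rule rad_determined_integrable1[where m=m])
        fix t s assume ts: "\<forall>j\<le>m. rademacher j t = rademacher j s"
        have "H t = H s" unfolding H_def by (rule sum.cong) (use ts in auto)
        then show "(norm (H t))\<^sup>2 = (norm (H s))\<^sup>2" by simp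
      qed
      have A0: "0 \<le> A" unfolding A_def by (rule integral_nonneg[OF Hi]) simp
      have coreI: "\<And>i. (\<lambda>t. rademacher (Suc i) t * g i (radsum x t)) integrable_on {0..1}"
        using core(1)[OF N summ sq] by blast
      have "(\<Sum>i<m. \<bar>ys i (u (x i))\<bar>) = (\<Sum>i<m. integral {0..1} (\<lambda>t. rademacher (Suc i) t * g i (radsum x t)))"
        using core(2)[OF N summ sq] gx by simp
      also have "\<dots> = integral {0..1} (\<lambda>t. \<Sum>i<m. rademacher (Suc i) t * g i (radsum x t))"
        by (rule integral_sum[symmetric]) (auto intro: coreI)
      also have "\<dots> = integral {0..1} (\<lambda>t. H t (radsum x t))"
        by (simp add: H_def blinfun.sum_left blinfun.scaleR_left)
      finally have eqS: "(\<Sum>i<m. \<bar>ys i (u (x i))\<bar>) = integral {0..1} (\<lambda>t. H t (radsum x t))" .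
      have HSi: "(\<lambda>t. H t (radsum x t)) integrable_on {0..1}"
        unfolding H_def by (simp add: blinfun.sum_left blinfun.scaleR_left) (intro integrable_sum coreI, simp)
      have key: "(\<Sum>i<m. \<bar>ys i (u (x i))\<bar>) \<le> sqrt A * sqrt B"
      proof (rule am_gm_opt[OF A0 B0])
        fix l :: real assume l: "0 < l"
        have "integral {0..1} (\<lambda>t. H t (radsum x t))
              \<le> integral {0..1} (\<lambda>t. l / 2 * (norm (H t))\<^sup>2 + 1 / (2 * l) * (norm (radsum x t))\<^sup>2)"
        proof (rule integral_le[OF HSi])
          show "(\<lambda>t. l / 2 * (norm (H t))\<^sup>2 + 1 / (2 * l) * (norm (radsum x t))\<^sup>2) integrable_on {0..1}"
            by (intro Henstock_Kurzweil_Integration.integrable_add integrable_on_mult_right Hi sq)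
          fix t :: real
          have "H t (radsum x t) \<le> norm (H t) * norm (radsum x t)"
            using norm_blinfun[of "H t" "radsum x t"] by simp
          also have "\<dots> \<le> l / 2 * (norm (H t))\<^sup>2 + 1 / (2 * l) * (norm (radsum x t))\<^sup>2"
          proof -
            have "0 \<le> (l * norm (H t) - norm (radsum x t))\<^sup>2" by simp
            then have "2 * l * (norm (H t) * norm (radsum x t)) \<le> l\<^sup>2 * (norm (H t))\<^sup>2 + (norm (radsum x t))\<^sup>2"
              by (simp add: power2_diff power_mult_distrib algebra_simps)
            then show ?thesis using l by (simp add: field_simps power2_eq_square)
          qed
          finally show "H t (radsum x t) \<le> l / 2 * (norm (H t))\<^sup>2 + 1 / (2 * l) * (norm (radsum x t))\<^sup>2" .
        qed
        also have "\<dots> = l / 2 * A + 1 / (2 * l) * B"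
        proof -
          have i1: "(\<lambda>t. l / 2 * (norm (H t))\<^sup>2) integrable_on {0..1}" by (rule integrable_on_mult_right[OF Hi])
          have i2: "(\<lambda>t. 1 / (2 * l) * (norm (radsum x t))\<^sup>2) integrable_on {0..1}" by (rule integrable_on_mult_right[OF sq])
          show ?thesis unfolding A_def B_def
            by (simp only: Henstock_Kurzweil_Integration.integral_add[OF i1 i2] integral_mult[OF Hi] integral_mult[OF sq])
        qed
        also have "\<dots> = l / 2 * A + B / (2 * l)" by simp
        finally show "(\<Sum>i<m. \<bar>ys i (u (x i))\<bar>) \<le> l / 2 * A + B / (2 * l)" using eqS by simp
      qed
      have "sqrt A \<le> C0 * weak2_norm_fin m w"
        using AS[where m=m and w=w] unfolding A_def H_def g_def .
      also have "\<dots> \<le> C0 * 1"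
      proof (rule mult_left_mono[OF _ C0])
        show "weak2_norm_fin m w \<le> 1" unfolding w_def
          by (rule weak2_le1[OF ys[folded s_def] s]) (simp add: \<sigma>_def sgn_if)
      qed
      finally have "sqrt A \<le> C0" by simp
      then have "sqrt A * sqrt B \<le> C0 * sqrt B" by (rule mult_right_mono) (simp add: B0)
      then show ?thesis using key by simp
    qed
    have summable: "summable (\<lambda>i. \<bar>ys i (u (x i))\<bar>)"
      by (rule summableI_nonneg_bounded[OF _ bound]) simp
    show "summable (\<lambda>i. \<bar>blinfun_apply (ys i) (blinfun_apply u (x i))\<bar>) \<and>
          (\<Sum>i. \<bar>blinfun_apply (ys i) (blinfun_apply u (x i))\<bar>) \<le> C0 * sqrt B"
      using summable suminf_le_const[OF summable bound] by simp
  qed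
qed

end
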